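(* Let $(\mathfrak{h},[\;,\;],\langle\;,\;\rangle_{\mathfrak{h}})$ be an Einstein Lorentzian nilpotent Lie algebra whose center $\mathrm{Z}(\mathfrak{h})$ is nondegenerate and Euclidean (positive definite), and let $\mathfrak{g}$, $[\;,\;]_{\mathfrak{g}}$, $\langle\;,\;\rangle_{\mathfrak{g}}$, $\omega$ be as in the context. If for all $u,v,w\in\mathfrak{g}$ one has $\omega(\mathrm{ad}_u^*v,w)+\omega(v,\mathrm{ad}_u^*w)=0$, then $(\mathfrak{g},[\;,\;]_{\mathfrak{g}},\langle\;,\;\rangle_{\mathfrak{g}})$ is a Ricci-soliton.
   Context: Setting: $\mathfrak{h}$ real finite-dimensional nilpotent Lie algebra with Lorentzian inner product, center $\mathrm{Z}(\mathfrak{h})$ nondegenerate with positive definite restriction $\langle\;,\;\rangle_z$. $\mathfrak{g}=\mathrm{Z}(\mathfrak{h})^\perp$ with restricted inner product $\langle\;,\;\rangle_{\mathfrak{g}}$; for $u,v\in\mathfrak{g}$, $[u,v]=[u,v]_{\mathfrak{g}}+\omega(u,v)$ with $[u,v]_{\mathfrak{g}}\in\mathfrak{g}$, $\omega(u,v)\in\mathrm{Z}(\mathfrak{h})$, and $(\mathfrak{g},[\;,\;]_{\mathfrak{g}})$ is a Lie algebra. $\mathrm{ad}_u(v)=[u,v]_{\mathfrak{g}}$ and $\mathrm{ad}_u^*$ is its adjoint w.r.t. $\langle\;,\;\rangle_{\mathfrak{g}}$. Ricci curvature is defined via the Levi-Civita product $2\langle \mathrm{L}_uv,w\rangle=\langle[u,v],w\rangle+\langle[w,u],v\rangle+\langle[w,v],u\rangle$,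 $K(u,v)=\mathrm{L}_{[u,v]}-[\mathrm{L}_u,\mathrm{L}_v]$, $\mathrm{ric}(u,v)=\mathrm{tr}(w\mapsto K(u,w)v)$, $\langle\mathrm{Ric}\,u,v\rangle=\mathrm{ric}(u,v)$; Einstein means $\mathrm{Ric}=\lambda\,\mathrm{Id}$ for some $\lambda\in\mathbb{R}$. A pseudo-Euclidean Lie algebra is a Ricci-soliton if there exist $\lambda\in\mathbb{R}$ and a derivation $D$ of it with $\mathrm{Ric}=\lambda\,\mathrm{Id}+D$. *)

theory Defs
  imports "HOL-Analysis.Analysis"
begin

text \<open>A finite-dimensional real vector space is modelled by a type of class
euclidean_space (its own inner product is used ONLY to make the space a
finite-dimensional real vector space; the pseudo-Euclidean metric is a separate
symmetric bilinear form B).\<close>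

definition bilinear_form :: "('a::real_vector \<Rightarrow> 'a \<Rightarrow> real) \<Rightarrow> bool" where
  "bilinear_form B \<longleftrightarrow> (\<forall>x. linear (B x)) \<and> (\<forall>y. linear (\<lambda>x. B x y))"

definition sym_form :: "('a \<Rightarrow> 'a \<Rightarrow> real) \<Rightarrow> bool" where
  "sym_form B \<longleftrightarrow> (\<forall>x y. B x y = B y x)"

text \<open>Lorentzian inner product: symmetric bilinear form of signature (n-1,1),
i.e. there is a timelike vector e whose B-orthogonal complement is spacelike.\<close>
definition lorentzian :: "('a::real_vector \<Rightarrow> 'a \<Rightarrow> real) \<Rightarrow> bool" where
  "lorentzian B \<longleftrightarrow> bilinear_form B \<and> sym_form B \<and>
     (\<exists>e. B e e < 0 \<and> (\<forall>x. B x e = 0 \<and> x \<noteq> 0 \<longrightarrow> B x x > 0))"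

definition lie_algebra :: "('a::real_vector \<Rightarrow> 'a \<Rightarrow> 'a) \<Rightarrow> bool" where
  "lie_algebra br \<longleftrightarrow> (\<forall>x. linear (br x)) \<and> (\<forall>y. linear (\<lambda>x. br x y)) \<and>
     (\<forall>x. br x x = 0) \<and>
     (\<forall>x y z. br x (br y z) + br y (br z x) + br z (br x y) = 0)"

fun lower_central :: "('a::real_vector \<Rightarrow> 'a \<Rightarrow> 'a) \<Rightarrow> nat \<Rightarrow> 'a set" where
  "lower_central br 0 = UNIV"
| "lower_central br (Suc k) = span {br x y | x y. y \<in> lower_central br k}"

definition nilpotent_lie :: "('a::real_vector \<Rightarrow> 'a \<Rightarrow> 'a) \<Rightarrow> bool" where
  "nilpotent_lie br \<longleftrightarrow> lie_algebra br \<and> (\<exists>k. lower_central br k = {0})"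

definition center :: "('a::real_vector \<Rightarrow> 'a \<Rightarrow> 'a) \<Rightarrow> 'a set" where
  "center br = {z. \<forall>x. br z x = 0}"

definition orth_compl :: "('a \<Rightarrow> 'a \<Rightarrow> real) \<Rightarrow> 'a set \<Rightarrow> 'a set" where
  "orth_compl B S = {u. \<forall>z\<in>S. B u z = 0}"

text \<open>Trace of a linear map f of a finite-dimensional subspace V into itself,
computed in a (chosen) basis of V; this is independent of the basis.\<close>
definition trace_on :: "'a::euclidean_space set \<Rightarrow> ('a \<Rightarrow> 'a) \<Rightarrow> real" where
  "trace_on V f = (let Bs = (SOME Bs. independent Bs \<and> span Bs = V)
                   in \<Sum>b\<in>Bs. representation Bs (f b) b)"

definition levi_civita ::
  "'a::real_vector set \<Rightarrow> ('a \<Rightarrow> 'a \<Rightarrow> 'a) \<Rightarrow> ('a \<Rightarrow> 'a \<Rightarrow> real) \<Rightarrow> 'a \<Rightarrow> 'a \<Rightarrow> 'a" where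
  "levi_civita V br B u v = (THE x. x \<in> V \<and> (\<forall>w\<in>V.
      2 * B x w = B (br u v) w + B (br w u) v + B (br w v) u))"

definition curv ::
  "'a::real_vector set \<Rightarrow> ('a \<Rightarrow> 'a \<Rightarrow> 'a) \<Rightarrow> ('a \<Rightarrow> 'a \<Rightarrow> real) \<Rightarrow> 'a \<Rightarrow> 'a \<Rightarrow> 'a \<Rightarrow> 'a" where
  "curv V br B u v x = (let L = levi_civita V br B in
      L (br u v) x - (L u (L v x) - L v (L u x)))"

definition ric ::
  "'a::euclidean_space set \<Rightarrow> ('a \<Rightarrow> 'a \<Rightarrow> 'a) \<Rightarrow> ('a \<Rightarrow> 'a \<Rightarrow> real) \<Rightarrow> 'a \<Rightarrow> 'a \<Rightarrow> real" where
  "ric V br B u v = trace_on V (\<lambda>w. curv V br B u w v)"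

text \<open>Einstein: Ric = \<lambda> Id, where B (Ric u) v = ric(u,v); i.e. ric(u,v) = \<lambda> B u v on V.\<close>
definition einstein ::
  "'a::euclidean_space set \<Rightarrow> ('a \<Rightarrow> 'a \<Rightarrow> 'a) \<Rightarrow> ('a \<Rightarrow> 'a \<Rightarrow> real) \<Rightarrow> bool" where
  "einstein V br B \<longleftrightarrow> (\<exists>c::real. \<forall>u\<in>V. \<forall>v\<in>V. ric V br B u v = c * B u v)"

definition derivation_on :: "'a::real_vector set \<Rightarrow> ('a \<Rightarrow> 'a \<Rightarrow> 'a) \<Rightarrow> ('a \<Rightarrow> 'a) \<Rightarrow> bool" where
  "derivation_on V br D \<longleftrightarrow> (\<forall>x\<in>V. D x \<in> V) \<and>
     (\<forall>x\<in>V. \<forall>y\<in>V. \<forall>a b. D (a *\<^sub>R x + b *\<^sub>R y) = a *\<^sub>R D x + b *\<^sub>R D y) \<and>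
     (\<forall>x\<in>V. \<forall>y\<in>V. D (br x y) = br (D x) y + br x (D y))"

text \<open>Ricci soliton: Ric = \<lambda> Id + D with D a derivation, i.e.
ric(u,v) = \<lambda> B u v + B (D u) v on V.\<close>
definition ricci_soliton ::
  "'a::euclidean_space set \<Rightarrow> ('a \<Rightarrow> 'a \<Rightarrow> 'a) \<Rightarrow> ('a \<Rightarrow> 'a \<Rightarrow> real) \<Rightarrow> bool" where
  "ricci_soliton V br B \<longleftrightarrow> (\<exists>(c::real) D. derivation_on V br D \<and>
     (\<forall>u\<in>V. \<forall>v\<in>V. ric V br B u v = c * B u v + B (D u) v))"

text \<open>Decomposition h = g \<oplus> Z(h), g = Z(h)^\<bottom>.  proj_center x is the Z(h)-component.\<close>
definition gpart :: "('a::real_vector \<Rightarrow> 'a \<Rightarrow> 'a) \<Rightarrow> ('a \<Rightarrow> 'a \<Rightarrow> real) \<Rightarrow> 'a set" where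
  "gpart br B = orth_compl B (center br)"

definition proj_center :: "('a::real_vector \<Rightarrow> 'a \<Rightarrow> 'a) \<Rightarrow> ('a \<Rightarrow> 'a \<Rightarrow> real) \<Rightarrow> 'a \<Rightarrow> 'a" where
  "proj_center br B x = (THE z. z \<in> center br \<and> x - z \<in> gpart br B)"

definition omega :: "('a::real_vector \<Rightarrow> 'a \<Rightarrow> 'a) \<Rightarrow> ('a \<Rightarrow> 'a \<Rightarrow> real) \<Rightarrow> 'a \<Rightarrow> 'a \<Rightarrow> 'a" where
  "omega br B u v = proj_center br B (br u v)"

definition br_g :: "('a::real_vector \<Rightarrow> 'a \<Rightarrow> 'a) \<Rightarrow> ('a \<Rightarrow> 'a \<Rightarrow> real) \<Rightarrow> 'a \<Rightarrow> 'a \<Rightarrow> 'a" where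
  "br_g br B u v = br u v - proj_center br B (br u v)"

definition ad_star :: "('a::real_vector \<Rightarrow> 'a \<Rightarrow> 'a) \<Rightarrow> ('a \<Rightarrow> 'a \<Rightarrow> real) \<Rightarrow> 'a \<Rightarrow> 'a \<Rightarrow> 'a" where
  "ad_star br B u w = (THE x. x \<in> gpart br B \<and>
      (\<forall>v\<in>gpart br B. B (br_g br B u v) w = B v x))"

end

theory Submission
  imports Defs
begin


definition nondeg :: "('a::real_vector \<Rightarrow> 'a \<Rightarrow> real) \<Rightarrow> 'a set \<Rightarrow> bool" where
  "nondeg B V \<longleftrightarrow> (\<forall>x\<in>V. (\<forall>y\<in>V. B x y = 0) \<longrightarrow> x = 0)"

lemma bl_simps:
  fixes f :: "'a::real_vector \<Rightarrow> 'b::real_vector \<Rightarrow> 'c::real_vector"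
  assumes l1: "\<And>x. linear (f x)" and l2: "\<And>y. linear (\<lambda>x. f x y)"
  shows "f (a + b) y = f a y + f b y" "f x (p + q) = f x p + f x q"
    "f (c *\<^sub>R a) y = c *\<^sub>R f a y" "f x (c *\<^sub>R p) = c *\<^sub>R f x p"
    "f (a - b) y = f a y - f b y" "f x (p - q) = f x p - f x q"
    "f (- a) y = - f a y" "f x (- p) = - f x p" "f 0 y = 0" "f x 0 = 0"
    "f (sum g I) y = (\<Sum>i\<in>I. f (g i) y)" "f x (sum h I) = (\<Sum>i\<in>I. f x (h i))"
  by (simp_all add: linear_add[OF l2] linear_add[OF l1] linear_scale[OF l2] linear_scale[OF l1]
    linear_diff[OF l2] linear_diff[OF l1] linear_neg[OF l2] linear_neg[OF l1]
    linear_0[OF l2] linear_0[OF l1] linear_sum[OF l2] linear_sum[OF l1])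

lemma lin_vanish_span:
  assumes "linear f" "\<forall>b\<in>Bs. f b = 0" "x \<in> span Bs"
  shows "f x = 0"
  using linear_eq_0_on_span assms by blast

lemma riesz:
  fixes B :: "'a::euclidean_space \<Rightarrow> 'a \<Rightarrow> real"
  assumes V: "subspace V" and bil: "bilinear_form B" and nd: "nondeg B V" and phi: "linear \<phi>"
  shows "\<exists>x\<in>V. \<forall>w\<in>V. B x w = \<phi> w"
proof -
  have l1: "\<And>x. linear (B x)" and l2: "\<And>y. linear (\<lambda>x. B x y)"
    using bil unfolding bilinear_form_def by blast+
  obtain Bs where Bs: "Bs \<subseteq> V" "independent Bs" "V \<subseteq> span Bs"
    using basis_exists[of V] by metis
  have fin: "finite Bs" using Bs(2) finiteI_independent by blast
  have spV: "span Bs = V" using Bs V by (metis span_eq_iff span_mono subset_antisym)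
  define T where "T x = (\<Sum>b\<in>Bs. B x b *\<^sub>R b)" for x
  have linT: "linear T"
  proof (rule linearI)
    fix x y show "T (x + y) = T x + T y"
      unfolding T_def by (simp add: bl_simps[OF l1 l2] scaleR_add_left sum.distrib)
  next
    fix c x show "T (c *\<^sub>R x) = c *\<^sub>R T x"
      unfolding T_def by (simp add: bl_simps[OF l1 l2] scaleR_sum_right)
  qed
  have coef: "\<forall>b\<in>Bs. f b = 0" if "(\<Sum>b\<in>Bs. f b *\<^sub>R b) = 0" for f
    using Bs(2) that unfolding independent_explicit by auto
  have vanish: "B x w = 0" if "\<forall>b\<in>Bs. B x b = 0" "w \<in> V" for x w
    using lin_vanish_span[OF l1[of x]] that spV by blast
  have TV: "T ` V \<subseteq> V"
    unfolding T_def using Bs(1) V by (auto intro!: subspace_sum subspace_scale)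
  have inj: "inj_on T V"
  proof (rule inj_onI)
    fix x y assume xy: "x \<in> V" "y \<in> V" "T x = T y"
    have "T (x - y) = 0" using xy linear_diff[OF linT] by simp
    hence "\<forall>b\<in>Bs. B (x - y) b = 0" unfolding T_def by (rule coef)
    hence "\<forall>w\<in>V. B (x - y) w = 0" using vanish by simp
    moreover have "x - y \<in> V" using xy(1,2) by (rule subspace_diff[OF V])
    ultimately show "x = y" using nd unfolding nondeg_def by auto
  qed
  have subTV: "subspace (T ` V)"
    using linT V by (simp add: linear_subspace_image)
  have "dim (T ` V) = dim V"
  proof -
    have sV: "span V = V" using V span_eq_iff by blast
    have "inj_on T (span V)" using inj by (simp only: sV)
    thus ?thesis using dim_image_eq[OF linT, of V] by blast
  qed
  hence TVeq: "T ` V = V"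
    using subspace_dim_equal[OF subTV V TV] by simp
  have "(\<Sum>b\<in>Bs. \<phi> b *\<^sub>R b) \<in> V"
    using Bs(1) V by (auto intro!: subspace_sum subspace_scale)
  hence "(\<Sum>b\<in>Bs. \<phi> b *\<^sub>R b) \<in> T ` V" using TVeq by simp
  then obtain x where x: "x \<in> V" "T x = (\<Sum>b\<in>Bs. \<phi> b *\<^sub>R b)"
    by (metis imageE)
  have "(\<Sum>b\<in>Bs. (B x b - \<phi> b) *\<^sub>R b) = 0"
    using x(2) unfolding T_def by (simp add: scaleR_diff_left sum_subtractf)
  hence "\<forall>b\<in>Bs. B x b - \<phi> b = 0" by (rule coef)
  hence "\<forall>w\<in>V. B x w - \<phi> w = 0"
    using lin_vanish_span[OF linear_compose_sub[OF l1[of x] phi]] spV by auto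
  thus ?thesis using x(1) by auto
qed


definition dualpair :: "('a::real_vector \<Rightarrow> 'a \<Rightarrow> real) \<Rightarrow> 'a set \<Rightarrow> 'a set \<Rightarrow> ('a \<Rightarrow> 'a) \<Rightarrow> bool" where
  "dualpair B V C e \<longleftrightarrow> finite C \<and> C \<subseteq> V \<and> (\<forall>c\<in>C. e c \<in> V) \<and>
     (\<forall>c\<in>C. \<forall>c'\<in>C. B c' (e c) = (if c' = c then 1 else 0)) \<and>
     (\<forall>x\<in>V. x = (\<Sum>c\<in>C. B x (e c) *\<^sub>R c)) \<and> (\<forall>y\<in>V. y = (\<Sum>c\<in>C. B y c *\<^sub>R e c))"

lemma sum_delta_mult:
  assumes "finite C" "c \<in> C"
  shows "(\<Sum>c'\<in>C. u c' * (if c' = c then 1 else 0)) = (u c :: real)"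
proof -
  have "(\<Sum>c'\<in>C. u c' * (if c' = c then 1 else 0)) = (\<Sum>c'\<in>C. if c' = c then u c else 0)"
    by (rule sum.cong) auto
  also have "\<dots> = u c" using assms by simp
  finally show ?thesis .
qed

lemma dual_exists:
  fixes B :: "'a::euclidean_space \<Rightarrow> 'a \<Rightarrow> real"
  assumes V: "subspace V" and bil: "bilinear_form B" and sym: "sym_form B" and nd: "nondeg B V"
    and ind: "independent Bs" and sp: "span Bs = V"
  shows "\<exists>e. dualpair B V Bs e"
proof -
  have l1: "\<And>x. linear (B x)" and l2: "\<And>y. linear (\<lambda>x. B x y)"
    using bil unfolding bilinear_form_def by blast+
  have sy: "\<And>x y. B x y = B y x" using sym unfolding sym_form_def by blast
  note bs = bl_simps[OF l1 l2]
  have fin: "finite Bs" using ind finiteI_independent by blast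
  have BsV: "Bs \<subseteq> V" using sp span_superset by blast
  have "\<forall>b\<in>Bs. \<exists>x. x \<in> V \<and> (\<forall>b'\<in>Bs. B x b' = (if b' = b then 1 else 0))"
  proof
    fix b assume "b \<in> Bs"
    obtain \<phi> where phi: "linear \<phi>" "\<forall>b'\<in>Bs. \<phi> b' = (if b' = b then 1 else (0::real))"
      using linear_independent_extend[OF ind, of "\<lambda>b'. if b' = b then 1 else (0::real)"] by blast
    obtain x where x: "x \<in> V" "\<forall>w\<in>V. B x w = \<phi> w" using riesz[OF V bil nd phi(1)] by blast
    have "\<forall>b'\<in>Bs. B x b' = (if b' = b then 1 else 0)"
    proof
      fix b' assume "b' \<in> Bs"
      thus "B x b' = (if b' = b then 1 else 0)" using x(2) phi(2) BsV by auto
    qed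
    thus "\<exists>x. x \<in> V \<and> (\<forall>b'\<in>Bs. B x b' = (if b' = b then 1 else 0))" using x(1) by blast
  qed
  from bchoice[OF this] obtain e where e: "\<forall>b\<in>Bs. e b \<in> V \<and> (\<forall>b'\<in>Bs. B (e b) b' = (if b' = b then 1 else 0))"
    by blast
  have delta: "\<forall>c\<in>Bs. \<forall>c'\<in>Bs. B c' (e c) = (if c' = c then 1 else 0)"
  proof (intro ballI)
    fix c c' assume "c \<in> Bs" "c' \<in> Bs"
    thus "B c' (e c) = (if c' = c then 1 else 0)" using e sy[of c' "e c"] by simp
  qed
  have xexp: "x = (\<Sum>c\<in>Bs. B x (e c) *\<^sub>R c)" if "x \<in> V" for x
  proof -
    have "x \<in> range (\<lambda>u. \<Sum>c\<in>Bs. u c *\<^sub>R c)"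
      using that sp span_finite[OF fin] by simp
    then obtain u where u: "x = (\<Sum>c\<in>Bs. u c *\<^sub>R c)" by blast
    have "B x (e c) = u c" if "c \<in> Bs" for c
    proof -
      have "B x (e c) = (\<Sum>c'\<in>Bs. u c' * B c' (e c))" unfolding u by (simp add: bs)
      also have "\<dots> = (\<Sum>c'\<in>Bs. u c' * (if c' = c then 1 else 0))"
        using delta that by (intro sum.cong) auto
      also have "\<dots> = u c" using sum_delta_mult[OF fin that] .
      finally show ?thesis .
    qed
    hence "(\<Sum>c\<in>Bs. B x (e c) *\<^sub>R c) = (\<Sum>c\<in>Bs. u c *\<^sub>R c)" by (intro sum.cong) auto
    thus ?thesis using u by simp
  qed
  have yexp: "y = (\<Sum>c\<in>Bs. B y c *\<^sub>R e c)" if "y \<in> V" for y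
  proof -
    define y' where "y' = (\<Sum>c\<in>Bs. B y c *\<^sub>R e c)"
    have y'V: "y' \<in> V" unfolding y'_def using e V by (auto intro!: subspace_sum subspace_scale)
    have "B (y - y') c' = 0" if "c' \<in> Bs" for c'
    proof -
      have "B y' c' = (\<Sum>c\<in>Bs. B y c * B (e c) c')" unfolding y'_def by (simp add: bs)
      also have "\<dots> = (\<Sum>c\<in>Bs. B y c * (if c = c' then 1 else 0))"
        using e that by (intro sum.cong) auto
      also have "\<dots> = B y c'" using sum_delta_mult[OF fin that] .
      finally show ?thesis by (simp add: bs)
    qed
    hence "\<forall>w\<in>V. B (y - y') w = 0"
      using lin_vanish_span[OF l1[of "y - y'"]] sp by blast
    moreover have "y - y' \<in> V" using that y'V by (rule subspace_diff[OF V])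
    ultimately have "y - y' = 0" using nd unfolding nondeg_def by blast
    thus ?thesis unfolding y'_def by simp
  qed
  have "dualpair B V Bs e"
    unfolding dualpair_def
  proof (intro conjI)
    show "\<forall>c\<in>Bs. e c \<in> V" using e by simp
  qed (use fin BsV delta xexp yexp in auto)
  thus ?thesis by blast
qed


lemma dualpairD:
  assumes "dualpair B V C e"
  shows "finite C" "C \<subseteq> V" "\<And>c. c \<in> C \<Longrightarrow> e c \<in> V"
    "\<And>c c'. c \<in> C \<Longrightarrow> c' \<in> C \<Longrightarrow> B c' (e c) = (if c' = c then 1 else 0)"
    "\<And>x. x \<in> V \<Longrightarrow> x = (\<Sum>c\<in>C. B x (e c) *\<^sub>R c)"
    "\<And>y. y \<in> V \<Longrightarrow> y = (\<Sum>c\<in>C. B y c *\<^sub>R e c)"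
  using assms unfolding dualpair_def by blast+

lemma trace_inv:
  fixes B :: "'a::real_vector \<Rightarrow> 'a \<Rightarrow> real"
  assumes bil: "bilinear_form B" and sym: "sym_form B"
    and d1: "dualpair B V C e" and d2: "dualpair B V C' e'" and f: "linear f"
  shows "(\<Sum>c\<in>C. B (f c) (e c)) = (\<Sum>c'\<in>C'. B (f c') (e' c'))"
proof -
  have l1: "\<And>x. linear (B x)" and l2: "\<And>y. linear (\<lambda>x. B x y)"
    using bil unfolding bilinear_form_def by blast+
  have sy: "\<And>x y. B x y = B y x" using sym unfolding sym_form_def by blast
  note bs = bl_simps[OF l1 l2]
  note D1 = dualpairD[OF d1] and D2 = dualpairD[OF d2]
  have "(\<Sum>c\<in>C. B (f c) (e c)) = (\<Sum>c\<in>C. \<Sum>c'\<in>C'. B c (e' c') * B (f c') (e c))"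
  proof (rule sum.cong[OF refl])
    fix c assume c: "c \<in> C"
    have "f c = f (\<Sum>c'\<in>C'. B c (e' c') *\<^sub>R c')" using D2(5)[of c] D1(2) c by auto
    also have "\<dots> = (\<Sum>c'\<in>C'. B c (e' c') *\<^sub>R f c')" by (simp add: linear_sum[OF f] linear_scale[OF f])
    finally show "B (f c) (e c) = (\<Sum>c'\<in>C'. B c (e' c') * B (f c') (e c))" by (simp add: bs)
  qed
  also have "\<dots> = (\<Sum>c'\<in>C'. \<Sum>c\<in>C. B c (e' c') * B (f c') (e c))" by (rule sum.swap)
  also have "\<dots> = (\<Sum>c'\<in>C'. B (f c') (e' c'))"
  proof (rule sum.cong[OF refl])
    fix c' assume c': "c' \<in> C'"
    have "B (f c') (e' c') = B (f c') (\<Sum>c\<in>C. B (e' c') c *\<^sub>R e c)" using D1(6)[OF D2(3)[OF c']] by simp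
    also have "\<dots> = (\<Sum>c\<in>C. B c (e' c') * B (f c') (e c))"
      by (simp add: bs, intro sum.cong refl, metis sy)
    finally show "(\<Sum>c\<in>C. B c (e' c') * B (f c') (e c)) = B (f c') (e' c')" by simp
  qed
  finally show ?thesis .
qed

lemma swap_dual:
  fixes B F :: "'a::real_vector \<Rightarrow> 'a \<Rightarrow> real"
  assumes bil: "bilinear_form B" and sym: "sym_form B" and bF: "bilinear_form F"
    and d1: "dualpair B V C e"
  shows "(\<Sum>c\<in>C. F (e c) c) = (\<Sum>c\<in>C. F c (e c))"
proof -
  have l1: "\<And>x. linear (B x)" and l2: "\<And>y. linear (\<lambda>x. B x y)"
    using bil unfolding bilinear_form_def by blast+
  have f1: "\<And>x. linear (F x)" and f2: "\<And>y. linear (\<lambda>x. F x y)"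
    using bF unfolding bilinear_form_def by blast+
  have sy: "\<And>x y. B x y = B y x" using sym unfolding sym_form_def by blast
  note bs = bl_simps[OF l1 l2] and fs = bl_simps[OF f1 f2]
  note D1 = dualpairD[OF d1]
  have "(\<Sum>c\<in>C. F (e c) c) = (\<Sum>c\<in>C. \<Sum>c'\<in>C. B (e c) (e c') * F c' c)"
  proof (rule sum.cong[OF refl])
    fix c assume c: "c \<in> C"
    have "F (e c) c = F (\<Sum>c'\<in>C. B (e c) (e c') *\<^sub>R c') c" using D1(5)[OF D1(3)[OF c]] by simp
    thus "F (e c) c = (\<Sum>c'\<in>C. B (e c) (e c') * F c' c)" by (simp add: fs)
  qed
  also have "\<dots> = (\<Sum>c'\<in>C. \<Sum>c\<in>C. B (e c) (e c') * F c' c)" by (rule sum.swap)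
  also have "\<dots> = (\<Sum>c'\<in>C. F c' (e c'))"
  proof (rule sum.cong[OF refl])
    fix c' assume c': "c' \<in> C"
    have "F c' (e c') = F c' (\<Sum>c\<in>C. B (e c') (e c) *\<^sub>R c)" using D1(5)[OF D1(3)[OF c']] by simp
    also have "\<dots> = (\<Sum>c\<in>C. B (e c) (e c') * F c' c)" by (simp add: fs sy[of "e c'"])
    finally show "(\<Sum>c\<in>C. B (e c) (e c') * F c' c) = F c' (e c')" by simp
  qed
  finally show ?thesis .
qed

lemma trace_dual:
  fixes B :: "'a::euclidean_space \<Rightarrow> 'a \<Rightarrow> real"
  assumes V: "subspace V" and bil: "bilinear_form B" and sym: "sym_form B" and nd: "nondeg B V"
    and d: "dualpair B V C e" and f: "linear f" and fV: "\<And>x. x \<in> V \<Longrightarrow> f x \<in> V"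
  shows "trace_on V f = (\<Sum>c\<in>C. B (f c) (e c))"
proof -
  define Bs where "Bs = (SOME Bs. independent Bs \<and> span Bs = V)"
  have "\<exists>Bs. independent Bs \<and> span Bs = V"
  proof -
    obtain Bs where Bs: "Bs \<subseteq> V" "independent Bs" "V \<subseteq> span Bs"
      using basis_exists[of V] by metis
    have "span Bs = V" using Bs V by (metis span_eq_iff span_mono subset_antisym)
    thus ?thesis using Bs(2) by blast
  qed
  hence Bs: "independent Bs" "span Bs = V" unfolding Bs_def by (metis (mono_tags, lifting) someI_ex)+
  obtain d where dd: "dualpair B V Bs d" using dual_exists[OF V bil sym nd Bs] by blast
  note D = dualpairD[OF dd]
  have "representation Bs (f b) b = B (f b) (d b)" if b: "b \<in> Bs" for b
  proof -
    have fbV: "f b \<in> V" using fV D(2) b by auto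
    have e1: "(\<Sum>c\<in>Bs. representation Bs (f b) c *\<^sub>R c) = f b"
      using sum_representation_eq[OF Bs(1), of "f b" Bs] fbV Bs(2) D(1) by simp
    have e2: "(\<Sum>c\<in>Bs. B (f b) (d c) *\<^sub>R c) = f b" using D(5)[OF fbV] by simp
    have "(\<Sum>c\<in>Bs. (representation Bs (f b) c - B (f b) (d c)) *\<^sub>R c) = 0"
      using e1 e2 by (simp add: scaleR_diff_left sum_subtractf)
    hence "\<forall>c\<in>Bs. representation Bs (f b) c - B (f b) (d c) = 0"
      using Bs(1) unfolding independent_explicit
      apply (elim conjE)
      apply (drule spec[of _ "\<lambda>c. representation Bs (f b) c - B (f b) (d c)"])
      by simp
    thus ?thesis using b by simp
  qed
  hence "trace_on V f = (\<Sum>b\<in>Bs. B (f b) (d b))"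
    unfolding trace_on_def Let_def Bs_def[symmetric] by (intro sum.cong) auto
  also have "\<dots> = (\<Sum>c\<in>C. B (f c) (e c))" using trace_inv[OF bil sym dd d f] .
  finally show ?thesis .
qed


lemma dual_union:
  fixes B :: "'a::real_vector \<Rightarrow> 'a \<Rightarrow> real"
  assumes bil: "bilinear_form B" and sym: "sym_form B"
    and d1: "dualpair B V1 C1 e1" and d2: "dualpair B V2 C2 e2"
    and orth: "\<And>x y. x \<in> V1 \<Longrightarrow> y \<in> V2 \<Longrightarrow> B x y = 0"
    and dec: "\<And>x. \<exists>a b. a \<in> V1 \<and> b \<in> V2 \<and> x = a + b"
  shows "dualpair B UNIV (C1 \<union> C2) (\<lambda>c. if c \<in> C1 then e1 c else e2 c)"
proof -
  have l1: "\<And>x. linear (B x)" and l2: "\<And>y. linear (\<lambda>x. B x y)"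
    using bil unfolding bilinear_form_def by blast+
  have sy: "\<And>x y. B x y = B y x" using sym unfolding sym_form_def by blast
  note bs = bl_simps[OF l1 l2]
  note D1 = dualpairD[OF d1] and D2 = dualpairD[OF d2]
  have orth2: "\<And>x y. x \<in> V1 \<Longrightarrow> y \<in> V2 \<Longrightarrow> B y x = 0" using orth sy by metis
  have disj: "C1 \<inter> C2 = {}"
  proof (rule ccontr)
    assume "C1 \<inter> C2 \<noteq> {}"
    then obtain c where c: "c \<in> C1" "c \<in> C2" by blast
    have "B c (e1 c) = 1" using D1(4)[OF c(1) c(1)] by simp
    moreover have "B c (e1 c) = 0" using orth2[OF D1(3)[OF c(1)]] D2(2) c(2) by blast
    ultimately show False by simp
  qed
  define E where "E c = (if c \<in> C1 then e1 c else e2 c)" for c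
  have E2: "\<And>c. c \<in> C2 \<Longrightarrow> E c = e2 c" using disj unfolding E_def by auto
  have E1: "\<And>c. c \<in> C1 \<Longrightarrow> E c = e1 c" unfolding E_def by auto
  have split: "(\<Sum>c\<in>C1 \<union> C2. g c) = (\<Sum>c\<in>C1. g c) + (\<Sum>c\<in>C2. g c)" for g :: "'a \<Rightarrow> 'a"
    using sum.union_disjoint[OF D1(1) D2(1) disj] by simp
  have xexp: "x = (\<Sum>c\<in>C1 \<union> C2. B x (E c) *\<^sub>R c)" for x
  proof -
    obtain a b where ab: "a \<in> V1" "b \<in> V2" "x = a + b" using dec by blast
    have "(\<Sum>c\<in>C1. B x (E c) *\<^sub>R c) = (\<Sum>c\<in>C1. B a (e1 c) *\<^sub>R c)"
      using ab E1 orth2[OF D1(3)] by (intro sum.cong) (auto simp: bs)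
    also have "\<dots> = a" using D1(5)[OF ab(1)] by simp
    finally have 1: "(\<Sum>c\<in>C1. B x (E c) *\<^sub>R c) = a" .
    have "(\<Sum>c\<in>C2. B x (E c) *\<^sub>R c) = (\<Sum>c\<in>C2. B b (e2 c) *\<^sub>R c)"
      using ab E2 orth[OF _ D2(3)] by (intro sum.cong) (auto simp: bs)
    also have "\<dots> = b" using D2(5)[OF ab(2)] by simp
    finally have 2: "(\<Sum>c\<in>C2. B x (E c) *\<^sub>R c) = b" .
    show ?thesis unfolding split 1 2 using ab(3) .
  qed
  have yexp: "x = (\<Sum>c\<in>C1 \<union> C2. B x c *\<^sub>R E c)" for x
  proof -
    obtain a b where ab: "a \<in> V1" "b \<in> V2" "x = a + b" using dec by blast
    have "(\<Sum>c\<in>C1. B x c *\<^sub>R E c) = (\<Sum>c\<in>C1. B a c *\<^sub>R e1 c)"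
      using ab E1 orth2 D1(2) by (intro sum.cong) (auto simp: bs)
    also have "\<dots> = a" using D1(6)[OF ab(1)] by simp
    finally have 1: "(\<Sum>c\<in>C1. B x c *\<^sub>R E c) = a" .
    have "(\<Sum>c\<in>C2. B x c *\<^sub>R E c) = (\<Sum>c\<in>C2. B b c *\<^sub>R e2 c)"
      using ab E2 orth D2(2) by (intro sum.cong) (auto simp: bs)
    also have "\<dots> = b" using D2(6)[OF ab(2)] by simp
    finally have 2: "(\<Sum>c\<in>C2. B x c *\<^sub>R E c) = b" .
    show ?thesis unfolding split 1 2 using ab(3) .
  qed
  have delta: "B c' (E c) = (if c' = c then 1 else 0)" if c: "c \<in> C1 \<union> C2" "c' \<in> C1 \<union> C2" for c c'
  proof -
    consider "c \<in> C1" "c' \<in> C1" | "c \<in> C1" "c' \<in> C2" | "c \<in> C2" "c' \<in> C1" | "c \<in> C2" "c' \<in> C2"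
      using c by blast
    thus ?thesis
    proof cases
      case 1 thus ?thesis using D1(4) E1 by simp
    next
      case 2
      have "c' \<noteq> c" using 2 disj by blast
      thus ?thesis using 2 E1 orth2[OF D1(3)[OF 2(1)]] D2(2) by auto
    next
      case 3
      have "c' \<noteq> c" using 3 disj by blast
      thus ?thesis using 3 E2 orth[OF _ D2(3)[OF 3(1)]] D1(2) by auto
    next
      case 4 thus ?thesis using D2(4) E2 by simp
    qed
  qed
  have "dualpair B UNIV (C1 \<union> C2) E"
    unfolding dualpair_def using D1(1) D2(1) xexp yexp delta by auto
  thus ?thesis unfolding E_def .
qed


lemma nondeg_unique:
  assumes V: "subspace V" and bil: "bilinear_form B" and nd: "nondeg B V"
    and x: "x \<in> V" "\<forall>w\<in>V. B x w = \<phi> w" and y: "y \<in> V" "\<forall>w\<in>V. B y w = \<phi> w"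
  shows "x = y"
proof -
  have l2: "\<And>y. linear (\<lambda>x. B x y)" using bil unfolding bilinear_form_def by blast
  have "\<forall>w\<in>V. B (x - y) w = 0" using x y linear_diff[OF l2] by simp
  moreover have "x - y \<in> V" using x(1) y(1) by (rule subspace_diff[OF V])
  ultimately show ?thesis using nd unfolding nondeg_def by auto
qed

lemma the_riesz:
  fixes B :: "'a::euclidean_space \<Rightarrow> 'a \<Rightarrow> real"
  assumes V: "subspace V" and bil: "bilinear_form B" and nd: "nondeg B V" and phi: "linear \<phi>"
  shows "(THE x. x \<in> V \<and> (\<forall>w\<in>V. B x w = \<phi> w)) \<in> V"
    "\<forall>w\<in>V. B (THE x. x \<in> V \<and> (\<forall>w\<in>V. B x w = \<phi> w)) w = \<phi> w"
proof -
  obtain x where x: "x \<in> V" "\<forall>w\<in>V. B x w = \<phi> w" using riesz[OF V bil nd phi] by blast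
  have "(THE x. x \<in> V \<and> (\<forall>w\<in>V. B x w = \<phi> w)) = x"
    using x nondeg_unique[OF V bil nd] by (intro the_equality) blast+
  thus "(THE x. x \<in> V \<and> (\<forall>w\<in>V. B x w = \<phi> w)) \<in> V"
    "\<forall>w\<in>V. B (THE x. x \<in> V \<and> (\<forall>w\<in>V. B x w = \<phi> w)) w = \<phi> w" using x by simp_all
qed

lemma the_riesz_eq:
  fixes B :: "'a::euclidean_space \<Rightarrow> 'a \<Rightarrow> real"
  assumes V: "subspace V" and bil: "bilinear_form B" and nd: "nondeg B V"
    and x: "x \<in> V" "\<forall>w\<in>V. B x w = \<phi> w"
  shows "(THE x. x \<in> V \<and> (\<forall>w\<in>V. B x w = \<phi> w)) = x"
  using x nondeg_unique[OF V bil nd] by (intro the_equality) blast+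

definition lc_rhs :: "('a \<Rightarrow> 'a \<Rightarrow> 'a) \<Rightarrow> ('a \<Rightarrow> 'a \<Rightarrow> real) \<Rightarrow> 'a \<Rightarrow> 'a \<Rightarrow> 'a \<Rightarrow> real" where
  "lc_rhs br B u v w = (B (br u v) w + B (br w u) v + B (br w v) u) / 2"

lemma levi_civita_the:
  "levi_civita V br B u v = (THE x. x \<in> V \<and> (\<forall>w\<in>V. B x w = lc_rhs br B u v w))"
  unfolding levi_civita_def lc_rhs_def
  by (rule arg_cong[where f=The]) (auto simp: fun_eq_iff field_simps)

lemma lc_rhs_linear:
  assumes bil: "bilinear_form B" and b1: "\<And>x. linear (br x)" and b2: "\<And>y. linear (\<lambda>x. br x y)"
  shows "linear (lc_rhs br B u v)"
proof -
  have l1: "\<And>x. linear (B x)" and l2: "\<And>y. linear (\<lambda>x. B x y)"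
    using bil unfolding bilinear_form_def by blast+
  note bs = bl_simps[OF l1 l2] and rs = bl_simps[OF b1 b2]
  show ?thesis unfolding lc_rhs_def
    by (rule linearI) (simp_all add: bs rs field_simps)
qed

lemma lc_char:
  fixes B :: "'a::euclidean_space \<Rightarrow> 'a \<Rightarrow> real"
  assumes V: "subspace V" and bil: "bilinear_form B" and nd: "nondeg B V"
    and b1: "\<And>x. linear (br x)" and b2: "\<And>y. linear (\<lambda>x. br x y)"
  shows "levi_civita V br B u v \<in> V" "\<forall>w\<in>V. B (levi_civita V br B u v) w = lc_rhs br B u v w"
  unfolding levi_civita_the using the_riesz[OF V bil nd lc_rhs_linear[OF bil b1 b2]] by blast+

lemma lc_eq:
  fixes B :: "'a::euclidean_space \<Rightarrow> 'a \<Rightarrow> real"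
  assumes V: "subspace V" and bil: "bilinear_form B" and nd: "nondeg B V"
    and x: "x \<in> V" "\<forall>w\<in>V. B x w = lc_rhs br B u v w"
  shows "levi_civita V br B u v = x"
  unfolding levi_civita_the using the_riesz_eq[OF V bil nd x] .

lemma lc_linear:
  fixes B :: "'a::euclidean_space \<Rightarrow> 'a \<Rightarrow> real"
  assumes V: "subspace V" and bil: "bilinear_form B" and nd: "nondeg B V"
    and b1: "\<And>x. linear (br x)" and b2: "\<And>y. linear (\<lambda>x. br x y)"
  shows "linear (levi_civita V br B u)" "linear (\<lambda>u. levi_civita V br B u v)"
proof -
  have l1: "\<And>x. linear (B x)" and l2: "\<And>y. linear (\<lambda>x. B x y)"
    using bil unfolding bilinear_form_def by blast+
  note bs = bl_simps[OF l1 l2] and rs = bl_simps[OF b1 b2]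
  note C = lc_char[OF V bil nd b1 b2]
  let ?L = "levi_civita V br B"
  show "linear (?L u)"
  proof (rule linearI)
    fix x y
    show "?L u (x + y) = ?L u x + ?L u y"
      by (rule lc_eq[OF V bil nd]) (use C in \<open>auto simp: bs rs lc_rhs_def field_simps intro: subspace_add[OF V]\<close>)
  next
    fix c x
    show "?L u (c *\<^sub>R x) = c *\<^sub>R ?L u x"
      by (rule lc_eq[OF V bil nd]) (use C in \<open>auto simp: bs rs lc_rhs_def field_simps intro: subspace_scale[OF V]\<close>)
  qed
  show "linear (\<lambda>u. ?L u v)"
  proof (rule linearI)
    fix x y
    show "?L (x + y) v = ?L x v + ?L y v"
      by (rule lc_eq[OF V bil nd]) (use C in \<open>auto simp: bs rs lc_rhs_def field_simps intro: subspace_add[OF V]\<close>)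
  next
    fix c x
    show "?L (c *\<^sub>R x) v = c *\<^sub>R ?L x v"
      by (rule lc_eq[OF V bil nd]) (use C in \<open>auto simp: bs rs lc_rhs_def field_simps intro: subspace_scale[OF V]\<close>)
  qed
qed


lemma curv_lin:
  assumes L1: "\<And>u. linear (levi_civita V br B u)" and L2: "\<And>v. linear (\<lambda>u. levi_civita V br B u v)"
    and b1: "\<And>x. linear (br x)" and b2: "\<And>y. linear (\<lambda>x. br x y)"
  shows "linear (\<lambda>w. curv V br B u w v)"
proof -
  note ls = bl_simps[OF L1 L2] and rs = bl_simps[OF b1 b2]
  show ?thesis unfolding curv_def Let_def
    by (rule linearI) (simp_all add: ls rs algebra_simps)
qed

lemma dual_exists_sub:
  fixes B :: "'a::euclidean_space \<Rightarrow> 'a \<Rightarrow> real"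
  assumes V: "subspace V" and bil: "bilinear_form B" and sym: "sym_form B" and nd: "nondeg B V"
  shows "\<exists>C e. dualpair B V C e"
proof -
  obtain Bs where Bs: "Bs \<subseteq> V" "independent Bs" "V \<subseteq> span Bs"
    using basis_exists[of V] by metis
  have "span Bs = V" using Bs V by (metis span_eq_iff span_mono subset_antisym)
  thus ?thesis using dual_exists[OF V bil sym nd Bs(2)] by blast
qed



locale EL =
  fixes br :: "'a::euclidean_space \<Rightarrow> 'a \<Rightarrow> 'a" and B :: "'a \<Rightarrow> 'a \<Rightarrow> real"
  assumes bil: "bilinear_form B" and sym: "sym_form B"
    and ndU: "nondeg B UNIV"
    and lie: "lie_algebra br"
    and Zpos: "\<forall>z\<in>center br. z \<noteq> 0 \<longrightarrow> B z z > 0"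
begin

abbreviation "Z \<equiv> center br"
abbreviation "G \<equiv> gpart br B"
abbreviation "pz \<equiv> proj_center br B"
abbreviation "om \<equiv> omega br B"
abbreviation "bg \<equiv> br_g br B"
abbreviation "LG \<equiv> levi_civita G bg B"
abbreviation "LH \<equiv> levi_civita UNIV br B"
abbreviation "ads \<equiv> ad_star br B"

definition jj :: "'a \<Rightarrow> 'a \<Rightarrow> 'a" where
  "jj z u = (THE x. x \<in> G \<and> (\<forall>w\<in>G. B x w = B z (om u w)))"

lemma l1: "linear (B x)" and l2: "linear (\<lambda>x. B x y)"
  using bil unfolding bilinear_form_def by blast+

lemma sy: "B x y = B y x" using sym unfolding sym_form_def by blast

lemmas bs = bl_simps[OF l1 l2]

lemma r1: "linear (br x)" and r2: "linear (\<lambda>x. br x y)"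
  using lie unfolding lie_algebra_def by blast+

lemmas rs = bl_simps[OF r1 r2]

lemma br_self: "br x x = 0" using lie unfolding lie_algebra_def by blast

lemma br_anti: "br y x = - br x y"
proof -
  have "0 = br (x + y) (x + y)" using br_self by simp
  also have "\<dots> = br x x + br y x + (br x y + br y y)" by (simp only: rs)
  also have "\<dots> = br x y + br y x" by (simp add: br_self)
  finally show ?thesis by (simp add: eq_neg_iff_add_eq_0 add.commute)
qed

lemma jacobi: "br x (br y z) + br y (br z x) + br z (br x y) = 0"
  using lie unfolding lie_algebra_def by blast

lemma Z_iff: "z \<in> Z \<longleftrightarrow> (\<forall>x. br z x = 0)" unfolding center_def by simp

lemma Z_left: "z \<in> Z \<Longrightarrow> br z x = 0" unfolding center_def by simp
lemma Z_right: "z \<in> Z \<Longrightarrow> br x z = 0" using Z_left br_anti by (metis neg_0_equal_iff_equal)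

lemma subZ: "subspace Z"
  unfolding subspace_def center_def by (simp add: rs)

lemma G_iff: "g \<in> G \<longleftrightarrow> (\<forall>z\<in>Z. B g z = 0)" unfolding gpart_def orth_compl_def by simp

lemma subG: "subspace G"
  unfolding subspace_def
proof (intro conjI ballI allI)
  show "0 \<in> G" unfolding G_iff by (simp add: bs)
  fix x y c assume "x \<in> G" "y \<in> G"
  thus "x + y \<in> G" unfolding G_iff by (simp add: bs)
next
  fix x c assume "x \<in> G"
  thus "c *\<^sub>R x \<in> G" unfolding G_iff by (simp add: bs)
qed

lemma ortGZ: "g \<in> G \<Longrightarrow> z \<in> Z \<Longrightarrow> B g z = 0" using G_iff by blast
lemma ortZG: "g \<in> G \<Longrightarrow> z \<in> Z \<Longrightarrow> B z g = 0" using ortGZ sy by metis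

lemma ndZ: "nondeg B Z"
  unfolding nondeg_def using Zpos by force

lemma ZG0: "x \<in> Z \<Longrightarrow> x \<in> G \<Longrightarrow> x = 0"
  using ortGZ Zpos by force

lemma decomp_ex: "\<exists>z. z \<in> Z \<and> x - z \<in> G"
proof -
  obtain z where z: "z \<in> Z" "\<forall>w\<in>Z. B z w = B x w" using riesz[OF subZ bil ndZ l1[of x]] by blast
  have "x - z \<in> G" unfolding G_iff using z by (simp add: bs)
  thus ?thesis using z(1) by blast
qed

lemma decomp_uniq:
  assumes "z1 \<in> Z" "x - z1 \<in> G" "z2 \<in> Z" "x - z2 \<in> G"
  shows "z1 = z2"
proof -
  have a: "z1 - z2 \<in> Z" using assms subspace_diff[OF subZ] by blast
  have "(x - z2) - (x - z1) \<in> G" using assms subspace_diff[OF subG] by blast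
  hence "z1 - z2 \<in> G" by (simp add: algebra_simps)
  hence "z1 - z2 = 0" using ZG0 a by blast
  thus ?thesis by simp
qed

lemma pz_char: "pz x \<in> Z" "x - pz x \<in> G"
proof -
  obtain z where z: "z \<in> Z" "x - z \<in> G" using decomp_ex by blast
  have "pz x = z" unfolding proj_center_def
    by (rule the_equality) (use z decomp_uniq in blast)+
  thus "pz x \<in> Z" "x - pz x \<in> G" using z by simp_all
qed

lemma pz_eq: "z \<in> Z \<Longrightarrow> x - z \<in> G \<Longrightarrow> pz x = z"
  using decomp_uniq pz_char by blast

lemma pz_Z[simp]: "z \<in> Z \<Longrightarrow> pz z = z"
  by (rule pz_eq) (simp_all add: subspace_0[OF subG])

lemma pz_G[simp]: "g \<in> G \<Longrightarrow> pz g = 0"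
  by (rule pz_eq) (simp_all add: subspace_0[OF subZ])

lemma pz_lin: "linear pz"
proof (rule linearI)
  fix x y
  show "pz (x + y) = pz x + pz y"
  proof (rule pz_eq)
    show "pz x + pz y \<in> Z" using pz_char subspace_add[OF subZ] by blast
    have "(x - pz x) + (y - pz y) \<in> G" using pz_char subspace_add[OF subG] by blast
    thus "x + y - (pz x + pz y) \<in> G" by (simp add: algebra_simps)
  qed
next
  fix c x
  show "pz (c *\<^sub>R x) = c *\<^sub>R pz x"
  proof (rule pz_eq)
    show "c *\<^sub>R pz x \<in> Z" using pz_char subspace_scale[OF subZ] by blast
    have "c *\<^sub>R (x - pz x) \<in> G" using pz_char subspace_scale[OF subG] by blast
    thus "c *\<^sub>R x - c *\<^sub>R pz x \<in> G" by (simp add: algebra_simps)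
  qed
qed

lemma pz_add[simp]: "pz (x + y) = pz x + pz y" using linear_add[OF pz_lin] .
lemma pz_diff[simp]: "pz (x - y) = pz x - pz y" using linear_diff[OF pz_lin] .
lemma pz_scale[simp]: "pz (c *\<^sub>R x) = c *\<^sub>R pz x" using linear_scale[OF pz_lin] .
lemma pz_neg[simp]: "pz (- x) = - pz x" using linear_neg[OF pz_lin] .
lemma pz_sum[simp]: "pz (sum f I) = (\<Sum>i\<in>I. pz (f i))" using linear_sum[OF pz_lin] .

lemma ndG: "nondeg B G"
  unfolding nondeg_def
proof (intro ballI impI)
  fix x assume x: "x \<in> G" and h: "\<forall>y\<in>G. B x y = 0"
  have "\<forall>y. B x y = 0"
  proof
    fix y
    have "B x y = B x (y - pz y) + B x (pz y)" by (simp add: bs)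
    also have "\<dots> = 0" using h pz_char ortGZ[OF x] by simp
    finally show "B x y = 0" .
  qed
  thus "x = 0" using ndU unfolding nondeg_def by blast
qed

lemma om_def2: "om u v = pz (br u v)" unfolding omega_def ..
lemma bg_def2: "bg u v = br u v - pz (br u v)" unfolding br_g_def ..

lemma om_Z[simp]: "om u v \<in> Z" unfolding om_def2 using pz_char by blast
lemma bg_G[simp]: "bg u v \<in> G" unfolding bg_def2 using pz_char by blast
lemma br_split: "br u v = bg u v + om u v" unfolding om_def2 bg_def2 by simp

lemma om1: "linear (om x)" unfolding om_def2
  using linear_compose[OF r1 pz_lin] by (simp add: o_def)
lemma om2: "linear (\<lambda>x. om x y)" unfolding om_def2
  using linear_compose[OF r2 pz_lin] by (simp add: o_def)
lemmas oms = bl_simps[OF om1 om2]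

lemma bg1: "linear (bg x)" unfolding bg_def2
  by (rule linear_compose_sub[OF r1]) (use linear_compose[OF r1 pz_lin] in \<open>simp add: o_def\<close>)
lemma bg2: "linear (\<lambda>x. bg x y)" unfolding bg_def2
  by (rule linear_compose_sub[OF r2]) (use linear_compose[OF r2 pz_lin] in \<open>simp add: o_def\<close>)
lemmas bgs = bl_simps[OF bg1 bg2]

lemma om_anti: "om y x = - om x y" unfolding om_def2 by (simp add: br_anti[of y x])
lemma bg_anti: "bg y x = - bg x y" unfolding bg_def2 by (simp add: br_anti[of y x])

lemma pz_om[simp]: "pz (om u v) = om u v" by simp
lemma pz_bg[simp]: "pz (bg u v) = 0" by simp


lemma jj_phi: "linear (\<lambda>w. B z (om u w))"
  using linear_compose[OF om1 l1] by (simp add: o_def)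

lemma jj_char: "jj z u \<in> G" "\<forall>w\<in>G. B (jj z u) w = B z (om u w)"
  unfolding jj_def using the_riesz[OF subG bil ndG jj_phi] by blast+

lemma jj_G[simp]: "jj z u \<in> G" using jj_char by blast
lemma jj_B: "w \<in> G \<Longrightarrow> B (jj z u) w = B z (om u w)" using jj_char by blast

lemma jj_eq: "x \<in> G \<Longrightarrow> \<forall>w\<in>G. B x w = B z (om u w) \<Longrightarrow> jj z u = x"
  unfolding jj_def by (rule the_riesz_eq[OF subG bil ndG])

lemma jj1: "linear (jj z)"
proof (rule linearI)
  fix x y show "jj z (x + y) = jj z x + jj z y"
    by (rule jj_eq) (simp_all add: subspace_add[OF subG] bs oms jj_B)
next
  fix c x show "jj z (c *\<^sub>R x) = c *\<^sub>R jj z x"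
    by (rule jj_eq) (simp_all add: subspace_scale[OF subG] bs oms jj_B)
qed

lemma jj2: "linear (\<lambda>z. jj z u)"
proof (rule linearI)
  fix x y show "jj (x + y) u = jj x u + jj y u"
    by (rule jj_eq) (simp_all add: subspace_add[OF subG] bs oms jj_B)
next
  fix c x show "jj (c *\<^sub>R x) u = c *\<^sub>R jj x u"
    by (rule jj_eq) (simp_all add: subspace_scale[OF subG] bs oms jj_B)
qed
lemmas jjs = bl_simps[OF jj2 jj1]

lemma jj_skew: "x \<in> G \<Longrightarrow> v \<in> G \<Longrightarrow> B (jj z x) v = - B x (jj z v)"
  using jj_B[of v z x] jj_B[of x z v] om_anti[of v x] sy[of x "jj z v"] by (simp add: bs)

lemma ads_the: "ads u w = (THE x. x \<in> G \<and> (\<forall>v\<in>G. B x v = B (bg u v) w))"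
  unfolding ad_star_def by (rule arg_cong[where f=The]) (auto simp: fun_eq_iff sy)

lemma ads_phi: "linear (\<lambda>v. B (bg u v) w)"
  using linear_compose[OF bg1 l2] by (simp add: o_def)

lemma ads_G[simp]: "ads u w \<in> G"
  unfolding ads_the using the_riesz[OF subG bil ndG ads_phi] by blast

lemma ads_B: "v \<in> G \<Longrightarrow> B (bg u v) w = B v (ads u w)"
proof -
  assume v: "v \<in> G"
  have "\<forall>v\<in>G. B (ads u w) v = B (bg u v) w"
    unfolding ads_the by (rule the_riesz(2)[OF subG bil ndG ads_phi])
  hence "B (ads u w) v = B (bg u v) w" using v by blast
  thus ?thesis using sy[of "ads u w" v] by simp
qed

lemma LG_G[simp]: "LG u v \<in> G" using lc_char[OF subG bil ndG bg1 bg2] by blast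
lemma LG_B: "w \<in> G \<Longrightarrow> B (LG u v) w = lc_rhs bg B u v w"
  using lc_char[OF subG bil ndG bg1 bg2] by blast
lemma LG1: "linear (LG u)" and LG2: "linear (\<lambda>u. LG u v)"
  using lc_linear[OF subG bil ndG bg1 bg2] by blast+
lemmas LGs = bl_simps[OF LG1 LG2]

lemma LH1: "linear (LH u)" and LH2: "linear (\<lambda>u. LH u v)"
  using lc_linear[OF subspace_UNIV bil ndU r1 r2] by blast+
lemmas LHs = bl_simps[OF LH1 LH2]

lemma pgG[simp]: "x - pz x \<in> G" using pz_char by blast
lemma pzZ[simp]: "pz x \<in> Z" using pz_char by blast

lemma LH_formula:
  "LH x y = LG (x - pz x) (y - pz y) + (1/2) *\<^sub>R om (x - pz x) (y - pz y)
     - (1/2) *\<^sub>R jj (pz y) (x - pz x) - (1/2) *\<^sub>R jj (pz x) (y - pz y)"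
proof (rule lc_eq[OF subspace_UNIV bil ndU])
  show "\<forall>w\<in>UNIV. B (LG (x - pz x) (y - pz y) + (1/2) *\<^sub>R om (x - pz x) (y - pz y)
     - (1/2) *\<^sub>R jj (pz y) (x - pz x) - (1/2) *\<^sub>R jj (pz x) (y - pz y)) w = lc_rhs br B x y w"
  proof
    fix w
    define a s c t e r where "a = x - pz x" "s = pz x" "c = y - pz y" "t = pz y" "e = w - pz w" "r = pz w"
    have m: "a \<in> G" "s \<in> Z" "c \<in> G" "t \<in> Z" "e \<in> G" "r \<in> Z" unfolding a_s_c_t_e_r_def by simp_all
    have xyw: "x = a + s" "y = c + t" "w = e + r" unfolding a_s_c_t_e_r_def by simp_all
    have cen: "\<And>q. br s q = 0" "\<And>q. br q t = 0" "\<And>q. br r q = 0" "\<And>q. br q s = 0"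
      using m Z_left Z_right by blast+
    have "br x y = br a c" unfolding xyw by (simp add: rs cen)
    hence h1: "br x y = bg a c + om a c" using br_split by simp
    have "br w x = br e a" unfolding xyw by (simp add: rs cen)
    hence h2: "br w x = bg e a + om e a" using br_split by simp
    have "br w y = br e c" unfolding xyw by (simp add: rs cen)
    hence h3: "br w y = bg e c + om e c" using br_split by simp
    have o1: "\<And>g z. g \<in> G \<Longrightarrow> z \<in> Z \<Longrightarrow> B g z = 0" and o2: "\<And>g z. g \<in> G \<Longrightarrow> z \<in> Z \<Longrightarrow> B z g = 0"
      using ortGZ ortZG by blast+
    have "(B (br x y) w + B (br w x) y + B (br w y) x) / 2 = (B (bg a c) e + B (om a c) r + (B (bg e a) c + B (om e a) t)
        + (B (bg e c) a + B (om e c) s)) / 2"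
      unfolding h1 h2 h3 unfolding xyw by (simp add: bs o1 o2 m)
    moreover have "B (LG a c + (1/2) *\<^sub>R om a c - (1/2) *\<^sub>R jj t a - (1/2) *\<^sub>R jj s c) w
        = lc_rhs bg B a c e + (1/2) * B (om a c) r - (1/2) * B t (om a e) - (1/2) * B s (om c e)"
      unfolding xyw by (simp add: bs o1 o2 m LG_B jj_B)
    moreover have "B t (om a e) = - B (om e a) t" "B s (om c e) = - B (om e c) s"
      by (simp_all add: om_anti[of a e] om_anti[of c e] bs sy[of t] sy[of s])
    moreover have "lc_rhs bg B a c e = (B (bg a c) e + B (bg e a) c + B (bg e c) a) / 2"
      by (simp add: lc_rhs_def)
    moreover have "lc_rhs br B x y w = (B (br x y) w + B (br w x) y + B (br w y) x) / 2"
      by (simp add: lc_rhs_def)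
    ultimately have fin: "B (LG a c + (1/2) *\<^sub>R om a c - (1/2) *\<^sub>R jj t a - (1/2) *\<^sub>R jj s c) w
        = lc_rhs br B x y w"
      by argo
    show "B (LG (x - pz x) (y - pz y) + (1/2) *\<^sub>R om (x - pz x) (y - pz y)
     - (1/2) *\<^sub>R jj (pz y) (x - pz x) - (1/2) *\<^sub>R jj (pz x) (y - pz y)) w = lc_rhs br B x y w"
      using fin unfolding a_s_c_t_e_r_def .
  qed
qed simp

end


context EL begin

lemma pz_br[simp]: "pz (br u v) = om u v" unfolding om_def2 ..
lemma br_om[simp]: "br u v - om u v = bg u v" unfolding om_def2 bg_def2 ..
lemma pz_LG[simp]: "pz (LG u v) = 0" by simp
lemma pz_jj[simp]: "pz (jj z u) = 0" by simp
lemma pz_zero[simp]: "pz 0 = 0" using linear_0[OF pz_lin] .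

lemmas LHf = LH_formula

lemma curv_unf: "curv V br' B u w v = levi_civita V br' B (br' u w) v
   - (levi_civita V br' B u (levi_civita V br' B w v) - levi_civita V br' B w (levi_civita V br' B u v))"
  unfolding curv_def Let_def ..

lemma KG_part:
  assumes u: "u \<in> G" and v: "v \<in> G" and b: "b \<in> G" and q: "q \<in> G"
  shows "B (curv UNIV br B u b v) q = B (curv G bg B u b v) q - (1/2) * B (om u b) (om v q)
     + (1/4) * B (om b v) (om u q) - (1/4) * B (om u v) (om b q)"
proof -
  have e1: "LH (br u b) v = LG (bg u b) v + (1/2) *\<^sub>R om (bg u b) v - (1/2) *\<^sub>R jj (om u b) v"
    using u v b by (simp add: LHf jjs)
  have e2: "LH b v = LG b v + (1/2) *\<^sub>R om b v" using v b by (simp add: LHf jjs)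
  have e3: "LH u v = LG u v + (1/2) *\<^sub>R om u v" using u v by (simp add: LHf jjs)
  have e4: "LH u (LG b v + (1/2) *\<^sub>R om b v) = LG u (LG b v) + (1/2) *\<^sub>R om u (LG b v)
      - (1/4) *\<^sub>R jj (om b v) u"
    using u by (simp add: LHf jjs)
  have e5: "LH b (LG u v + (1/2) *\<^sub>R om u v) = LG b (LG u v) + (1/2) *\<^sub>R om b (LG u v)
      - (1/4) *\<^sub>R jj (om u v) b"
    using b by (simp add: LHf jjs)
  have eqH: "curv UNIV br B u b v = LG (bg u b) v + (1/2) *\<^sub>R om (bg u b) v - (1/2) *\<^sub>R jj (om u b) v
     - ((LG u (LG b v) + (1/2) *\<^sub>R om u (LG b v) - (1/4) *\<^sub>R jj (om b v) u)
     - (LG b (LG u v) + (1/2) *\<^sub>R om b (LG u v) - (1/4) *\<^sub>R jj (om u v) b))"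
    unfolding curv_unf e1 e2 e3 e4 e5 ..
  have eqG: "curv G bg B u b v = LG (bg u b) v - (LG u (LG b v) - LG b (LG u v))"
    unfolding curv_unf ..
  show ?thesis
    using q unfolding eqH eqG by (simp add: bs ortZG jj_B algebra_simps)
qed

lemma KZ_part:
  assumes u: "u \<in> G" and v: "v \<in> G" and z: "z \<in> Z" and q: "q \<in> Z"
  shows "B (curv UNIV br B u z v) q = (1/4) * B (om u (jj z v)) q"
proof -
  have bz: "br u z = 0" using Z_right z by blast
  have e1: "LH 0 v = 0" using v by (simp add: LHf jjs LGs oms)
  have e2: "LH z v = - (1/2) *\<^sub>R jj z v" using v z by (simp add: LHf jjs LGs oms)
  have e3: "LH u v = LG u v + (1/2) *\<^sub>R om u v" using u v by (simp add: LHf jjs)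
  have e4: "LH u (- (1/2) *\<^sub>R jj z v) = - (1/2) *\<^sub>R LG u (jj z v) - (1/4) *\<^sub>R om u (jj z v)"
    using u by (simp add: LHf jjs LGs oms)
  have e5: "LH z (LG u v + (1/2) *\<^sub>R om u v) = - (1/2) *\<^sub>R jj z (LG u v)"
    using z by (simp add: LHf jjs LGs oms)
  have "curv UNIV br B u z v = 0 - ((- (1/2) *\<^sub>R LG u (jj z v) - (1/4) *\<^sub>R om u (jj z v))
     - (- (1/2) *\<^sub>R jj z (LG u v)))"
    unfolding curv_unf bz e1 e2 e3 e4 e5 ..
  thus ?thesis using q by (simp add: bs ortGZ)
qed

end


context EL begin

lemma bilF1: "bilinear_form (\<lambda>x y. B p (om x y))"
  unfolding bilinear_form_def
  using linear_compose[OF om1 l1] linear_compose[OF om2 l1] by (simp add: o_def)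

lemma bilF2: "bilinear_form (\<lambda>x y. B (om p x) (om q y))"
  unfolding bilinear_form_def
proof (intro conjI allI)
  fix x show "linear (\<lambda>y. B (om p x) (om q y))" using linear_compose[OF om1 l1] by (simp add: o_def)
next
  fix y show "linear (\<lambda>x. B (om p x) (om q y))"
    using linear_compose[OF om1[of p] l2[of "om q y"]] by (simp add: o_def)
qed

lemma S_eq:
  assumes u: "u \<in> G" and v: "v \<in> G" and dG: "dualpair B G Bg d" and dZ: "dualpair B Z BZ eZ"
  shows "(\<Sum>b\<in>Bg. B (om u b) (om v (d b))) = (\<Sum>z\<in>BZ. B (jj (eZ z) u) (jj z v))"
proof -
  note DG = dualpairD[OF dG] and DZ = dualpairD[OF dZ]
  have "(\<Sum>b\<in>Bg. B (om u b) (om v (d b))) = (\<Sum>b\<in>Bg. \<Sum>z\<in>BZ. B (jj (eZ z) u) b * B (jj z v) (d b))"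
  proof (rule sum.cong[OF refl])
    fix b assume b: "b \<in> Bg"
    have bG: "b \<in> G" and dbG: "d b \<in> G" using DG(2,3) b by auto
    have "B (om u b) (om v (d b)) = B (\<Sum>z\<in>BZ. B (om u b) (eZ z) *\<^sub>R z) (om v (d b))"
      using DZ(5)[of "om u b"] by simp
    also have "\<dots> = (\<Sum>z\<in>BZ. B (om u b) (eZ z) * B z (om v (d b)))" by (simp add: bs)
    also have "\<dots> = (\<Sum>z\<in>BZ. B (jj (eZ z) u) b * B (jj z v) (d b))"
    proof (rule sum.cong[OF refl])
      fix z assume "z \<in> BZ"
      show "B (om u b) (eZ z) * B z (om v (d b)) = B (jj (eZ z) u) b * B (jj z v) (d b)"
        using jj_B[OF bG, of "eZ z" u] jj_B[OF dbG, of z v] sy[of "om u b" "eZ z"] by simp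
    qed
    finally show "B (om u b) (om v (d b)) = (\<Sum>z\<in>BZ. B (jj (eZ z) u) b * B (jj z v) (d b))" .
  qed
  also have "\<dots> = (\<Sum>z\<in>BZ. \<Sum>b\<in>Bg. B (jj (eZ z) u) b * B (jj z v) (d b))" by (rule sum.swap)
  also have "\<dots> = (\<Sum>z\<in>BZ. B (jj (eZ z) u) (jj z v))"
  proof (rule sum.cong[OF refl])
    fix z assume "z \<in> BZ"
    have "B (jj (eZ z) u) (jj z v) = B (jj (eZ z) u) (\<Sum>b\<in>Bg. B (jj z v) (d b) *\<^sub>R b)"
      using DG(5)[of "jj z v"] by simp
    also have "\<dots> = (\<Sum>b\<in>Bg. B (jj (eZ z) u) b * B (jj z v) (d b))" by (simp add: bs mult.commute)
    finally show "(\<Sum>b\<in>Bg. B (jj (eZ z) u) b * B (jj z v) (d b)) = B (jj (eZ z) u) (jj z v)" by simp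
  qed
  finally show ?thesis .
qed

lemma ric_rel:
  assumes u: "u \<in> G" and v: "v \<in> G" and dG: "dualpair B G Bg d" and dZ: "dualpair B Z BZ eZ"
  shows "ric UNIV br B u v = ric G bg B u v - (1/2) * (\<Sum>z\<in>BZ. B (jj (eZ z) u) (jj z v))"
proof -
  note DG = dualpairD[OF dG] and DZ = dualpairD[OF dZ]
  define E where "E c = (if c \<in> Bg then d c else eZ c)" for c
  have dec: "\<And>x. \<exists>a b. a \<in> G \<and> b \<in> Z \<and> x = a + b"
  proof -
    fix x show "\<exists>a b. a \<in> G \<and> b \<in> Z \<and> x = a + b"
      by (rule exI[of _ "x - pz x"], rule exI[of _ "pz x"]) simp
  qed
  have dU: "dualpair B UNIV (Bg \<union> BZ) E"
    unfolding E_def by (rule dual_union[OF bil sym dG dZ ortGZ dec])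
  have disj: "Bg \<inter> BZ = {}"
  proof (rule ccontr)
    assume "Bg \<inter> BZ \<noteq> {}"
    then obtain c where c: "c \<in> Bg" "c \<in> BZ" by blast
    have "c \<in> G" "c \<in> Z" using c DG(2) DZ(2) by auto
    hence "c = 0" using ZG0 by blast
    moreover have "B c (d c) = 1" using DG(4)[OF c(1) c(1)] by simp
    ultimately show False by (simp add: bs)
  qed
  let ?K = "\<lambda>w. curv UNIV br B u w v"
  have "ric UNIV br B u v = (\<Sum>c\<in>Bg \<union> BZ. B (?K c) (E c))"
    unfolding ric_def by (rule trace_dual[OF subspace_UNIV bil sym ndU dU curv_lin[OF LH1 LH2 r1 r2]]) simp
  also have "\<dots> = (\<Sum>c\<in>Bg. B (?K c) (E c)) + (\<Sum>c\<in>BZ. B (?K c) (E c))"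
    by (rule sum.union_disjoint[OF DG(1) DZ(1) disj])
  also have "(\<Sum>c\<in>Bg. B (?K c) (E c)) = (\<Sum>c\<in>Bg. B (?K c) (d c))"
    unfolding E_def by (rule sum.cong) auto
  also have "(\<Sum>c\<in>BZ. B (?K c) (E c)) = (\<Sum>c\<in>BZ. B (?K c) (eZ c))"
    unfolding E_def using disj by (intro sum.cong) auto
  finally have r1: "ric UNIV br B u v = (\<Sum>c\<in>Bg. B (?K c) (d c)) + (\<Sum>c\<in>BZ. B (?K c) (eZ c))" .
  have cG: "curv G bg B u w v \<in> G" for w
    unfolding curv_unf by (intro subspace_diff[OF subG] LG_G)
  have r2: "ric G bg B u v = (\<Sum>c\<in>Bg. B (curv G bg B u c v) (d c))"
    unfolding ric_def by (rule trace_dual[OF subG bil sym ndG dG curv_lin[OF LG1 LG2 bg1 bg2]]) (rule cG)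
  define S where "S = (\<Sum>c\<in>Bg. B (om u c) (om v (d c)))"
  define S2 where "S2 = (\<Sum>c\<in>Bg. B (om c v) (om u (d c)))"
  define S3 where "S3 = (\<Sum>c\<in>Bg. B (om u v) (om c (d c)))"
  have "(\<Sum>c\<in>Bg. B (?K c) (d c)) = (\<Sum>c\<in>Bg. B (curv G bg B u c v) (d c) - (1/2) * B (om u c) (om v (d c))
     + (1/4) * B (om c v) (om u (d c)) - (1/4) * B (om u v) (om c (d c)))"
    using DG(2,3) by (intro sum.cong refl KG_part[OF u v]) auto
  also have "\<dots> = ric G bg B u v - (1/2) * S + (1/4) * S2 - (1/4) * S3"
    unfolding r2 S_def S2_def S3_def by (simp add: sum.distrib sum_subtractf sum_distrib_left)
  finally have p1: "(\<Sum>c\<in>Bg. B (?K c) (d c)) = ric G bg B u v - (1/2) * S + (1/4) * S2 - (1/4) * S3" .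
  have S3: "S3 = 0"
  proof -
    have "(\<Sum>c\<in>Bg. B (om u v) (om (d c) c)) = S3"
      unfolding S3_def by (rule swap_dual[OF bil sym bilF1 dG])
    moreover have "(\<Sum>c\<in>Bg. B (om u v) (om (d c) c)) = - S3"
      unfolding S3_def by (simp add: om_anti[of "d _"] bs sum_negf)
    ultimately show ?thesis by simp
  qed
  have S2: "S2 = - S"
  proof -
    have "(\<Sum>c\<in>Bg. B (om v (d c)) (om u c)) = (\<Sum>c\<in>Bg. B (om v c) (om u (d c)))"
      by (rule swap_dual[OF bil sym bilF2 dG])
    moreover have "(\<Sum>c\<in>Bg. B (om v (d c)) (om u c)) = S"
      unfolding S_def by (rule sum.cong[OF refl]) (rule sy)
    moreover have "S2 = - (\<Sum>c\<in>Bg. B (om v c) (om u (d c)))"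
      unfolding S2_def by (simp add: om_anti[of _ v] bs sum_negf)
    ultimately show ?thesis by simp
  qed
  have "(\<Sum>c\<in>BZ. B (?K c) (eZ c)) = (\<Sum>c\<in>BZ. (1/4) * B (jj (eZ c) u) (jj c v))"
  proof (rule sum.cong[OF refl])
    fix c assume c: "c \<in> BZ"
    have "c \<in> Z" "eZ c \<in> Z" using c DZ(2,3) by auto
    hence "B (?K c) (eZ c) = (1/4) * B (om u (jj c v)) (eZ c)" using KZ_part[OF u v] by blast
    also have "B (om u (jj c v)) (eZ c) = B (jj (eZ c) u) (jj c v)"
      using jj_B[of "jj c v" "eZ c" u] sy[of "om u (jj c v)" "eZ c"] by simp
    finally show "B (?K c) (eZ c) = (1/4) * B (jj (eZ c) u) (jj c v)" .
  qed
  also have "\<dots> = (1/4) * S" unfolding S_def S_eq[OF u v dG dZ] by (simp add: sum_distrib_left)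
  finally have p2: "(\<Sum>c\<in>BZ. B (?K c) (eZ c)) = (1/4) * S" .
  show ?thesis unfolding r1 p1 p2 S3 S2 using S_eq[OF u v dG dZ] unfolding S_def by simp
qed

end


context EL begin

lemma om_Zr: "z \<in> Z \<Longrightarrow> om w z = 0"
  unfolding om_def2 using Z_right by simp

lemma jac_om: "om w (bg u x) + om u (bg x w) + om x (bg w u) = 0"
proof -
  have "pz (br w (br u x) + br u (br x w) + br x (br w u)) = 0" using jacobi[of w u x] by simp
  hence "om w (br u x) + om u (br x w) + om x (br w u) = 0" by simp
  moreover have "om w (br u x) = om w (bg u x)" "om u (br x w) = om u (bg x w)" "om x (br w u) = om x (bg w u)"
    by (simp_all add: br_split oms om_Zr)
  ultimately show ?thesis by simp
qed

lemma cocycle: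
  assumes w: "w \<in> G" and u: "u \<in> G"
  shows "jj z (bg w u) = ads u (jj z w) - ads w (jj z u)"
proof (rule jj_eq)
  show "ads u (jj z w) - ads w (jj z u) \<in> G" by (simp add: subspace_diff[OF subG])
  show "\<forall>x\<in>G. B (ads u (jj z w) - ads w (jj z u)) x = B z (om (bg w u) x)"
  proof
    fix x assume x: "x \<in> G"
    have a: "B (ads u (jj z w)) x = B z (om w (bg u x))"
      using ads_B[OF x, of u "jj z w"] sy[of "ads u (jj z w)" x] sy[of "bg u x" "jj z w"] jj_B[of "bg u x" z w]
      by simp
    have b: "B (ads w (jj z u)) x = - B z (om u (bg x w))"
      using ads_B[OF x, of w "jj z u"] sy[of "ads w (jj z u)" x] sy[of "bg w x" "jj z u"] jj_B[of "bg w x" z u]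
        bg_anti[of x w] by (simp add: oms bs)
    have c: "om (bg w u) x = om w (bg u x) + om u (bg x w)"
      using jac_om[of w u x] om_anti[of x "bg w u"] by (simp add: algebra_simps eq_neg_iff_add_eq_0)
    show "B (ads u (jj z w) - ads w (jj z u)) x = B z (om (bg w u) x)"
      unfolding c by (simp add: bs a b)
  qed
qed

lemma hypj:
  assumes hyp: "\<forall>u\<in>G. \<forall>v\<in>G. \<forall>w\<in>G. om (ads u v) w + om v (ads u w) = 0"
    and u: "u \<in> G" and v: "v \<in> G"
  shows "jj z (ads u v) = - bg u (jj z v)"
proof (rule jj_eq)
  show "- bg u (jj z v) \<in> G" by (simp add: subspace_neg[OF subG])
  show "\<forall>x\<in>G. B (- bg u (jj z v)) x = B z (om (ads u v) x)"
  proof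
    fix x assume x: "x \<in> G"
    have h: "om (ads u v) x = - om v (ads u x)" using hyp u v x by (simp add: eq_neg_iff_add_eq_0)
    have "B (- bg u (jj z v)) x = - B (jj z v) (ads u x)" using ads_B[of "jj z v" u x] by (simp add: bs)
    also have "\<dots> = - B z (om v (ads u x))" using jj_B[of "ads u x" z v] by simp
    finally show "B (- bg u (jj z v)) x = B z (om (ads u v) x)" unfolding h by (simp add: bs)
  qed
qed

lemma leib:
  assumes hyp: "\<forall>u\<in>G. \<forall>v\<in>G. \<forall>w\<in>G. om (ads u v) w + om v (ads u w) = 0"
    and w: "w \<in> G" and u: "u \<in> G"
  shows "jj z (jj z' (bg w u)) = bg (jj z (jj z' w)) u + bg w (jj z (jj z' u))"
proof -
  have "jj z (jj z' (bg w u)) = jj z (ads u (jj z' w)) - jj z (ads w (jj z' u))"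
    unfolding cocycle[OF w u] by (simp add: jjs)
  also have "\<dots> = - bg u (jj z (jj z' w)) + bg w (jj z (jj z' u))"
    using hypj[OF hyp u, of "jj z' w" z] hypj[OF hyp w, of "jj z' u" z] by simp
  finally show ?thesis using bg_anti[of u "jj z (jj z' w)"] by simp
qed

lemma soliton:
  assumes hyp: "\<forall>u\<in>G. \<forall>v\<in>G. \<forall>w\<in>G. om (ads u v) w + om v (ads u w) = 0"
    and ein: "einstein UNIV br B"
  shows "ricci_soliton G bg B"
proof -
  obtain Bg d where dG: "dualpair B G Bg d" using dual_exists_sub[OF subG bil sym ndG] by blast
  obtain BZ eZ where dZ: "dualpair B Z BZ eZ" using dual_exists_sub[OF subZ bil sym ndZ] by blast
  obtain c where c: "\<forall>u v. ric UNIV br B u v = c * B u v" using ein unfolding einstein_def by blast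
  define D where "D x = - (1/2) *\<^sub>R (\<Sum>z\<in>BZ. jj z (jj (eZ z) x))" for x
  have linD: "linear D"
    unfolding D_def by (rule linearI) (simp_all add: jjs scaleR_sum_right sum.distrib algebra_simps)
  have der: "derivation_on G bg D"
    unfolding derivation_on_def
  proof (intro conjI ballI allI)
    fix x assume "x \<in> G"
    show "D x \<in> G" unfolding D_def
      by (intro subspace_scale[OF subG] subspace_sum[OF subG]) simp
  next
    fix x y a b
    show "D (a *\<^sub>R x + b *\<^sub>R y) = a *\<^sub>R D x + b *\<^sub>R D y"
      by (simp add: linear_add[OF linD] linear_scale[OF linD])
  next
    fix x y assume x: "x \<in> G" and y: "y \<in> G"
    show "D (bg x y) = bg (D x) y + bg x (D y)"
      unfolding D_def using leib[OF hyp x y]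
      by (simp add: bgs sum.distrib scaleR_add_right)
  qed
  have eq: "ric G bg B u v = c * B u v + B (D u) v" if u: "u \<in> G" and v: "v \<in> G" for u v
  proof -
    have "B (D u) v = (1/2) * (\<Sum>z\<in>BZ. B (jj (eZ z) u) (jj z v))"
      unfolding D_def using jj_skew[OF jj_G v] by (simp add: bs sum_negf)
    thus ?thesis using ric_rel[OF u v dG dZ] c by simp
  qed
  show ?thesis unfolding ricci_soliton_def using der eq by blast
qed

end

theorem proposition3p3:
  fixes br :: "'a::euclidean_space \<Rightarrow> 'a \<Rightarrow> 'a"
    and B :: "'a \<Rightarrow> 'a \<Rightarrow> real"
  assumes "nilpotent_lie br"
    and "lorentzian B"
    and "einstein UNIV br B"
    and "\<forall>z\<in>center br. (\<forall>y\<in>center br. B z y = 0) \<longrightarrow> z = 0"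
    and "\<forall>z\<in>center br. z \<noteq> 0 \<longrightarrow> B z z > 0"
    and "\<forall>u\<in>gpart br B. \<forall>v\<in>gpart br B. \<forall>w\<in>gpart br B.
           omega br B (ad_star br B u v) w + omega br B v (ad_star br B u w) = 0"
  shows "ricci_soliton (gpart br B) (br_g br B) B"
proof -
  have bil: "bilinear_form B" and sym: "sym_form B" using assms(2) unfolding lorentzian_def by blast+
  obtain e where e: "B e e < 0" "\<forall>x. B x e = 0 \<and> x \<noteq> 0 \<longrightarrow> B x x > 0"
    using assms(2) unfolding lorentzian_def by blast
  have ndU: "nondeg B UNIV"
    unfolding nondeg_def
  proof (intro ballI impI)
    fix x assume "\<forall>y\<in>UNIV. B x y = 0"
    hence "B x e = 0" "B x x = 0" by auto
    thus "x = 0" using e(2) by force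
  qed
  have lie: "lie_algebra br" using assms(1) unfolding nilpotent_lie_def by blast
  interpret EL br B using bil sym ndU lie assms(5) by unfold_locales
  show ?thesis using soliton[OF assms(6) assms(3)] .
qed


end
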